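(* Let $\Omega\subseteq\mathbb{R}^3$ be open and $R\in C^2(\Omega;SO(3))$ with $\operatorname{curl}R=\alpha$ for some constant matrix $\alpha\in\mathbb{R}^{3\times3}$. Then: (i) $\operatorname{div}R_i=\varepsilon_{ijk}\,\alpha_j\cdot R_k$ for $i\in\{1,2,3\}$; (ii) $\Delta R_i=\varepsilon_{ijk}\nabla(\alpha_j\cdot R_k)$ for $i\in\{1,2,3\}$; (iii) $|\nabla R|^2=-\mathrm{tr}(R^T\alpha R^T\alpha)$; (iv) $\mathrm{tr}(R^T\alpha R^T\alpha)=|(R^T\alpha)_{sym}|^2-|(R^T\alpha)_{skew}|^2$; (v) if $R(x_0)=Id$ for some $x_0\in\Omega$, then $|\operatorname{div}(R)(x_0)|^2=2|\alpha_{skew}|^2$; (vi) $\sum_{i=1}^3|(\nabla R_i)_{sym}|^2\ge\frac13|\operatorname{div}(R)|^2$; (vii) $\sum_{i=1}^3|(\nabla R_i)_{skew}|^2=\frac12|\alpha|^2$. All identities hold pointwise in $\Omega$.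
   Context: Einstein summation convention is used; $\varepsilon_{ijk}$ is the sign of the permutation $(ijk)$. For a matrix $A$, $A_i$ denotes its $i$-th row. $\operatorname{curl}$ of a matrix field is taken row-wise: $(\operatorname{curl}R)_{ij}=\varepsilon_{jkl}\partial_kR_{il}$, so $\alpha_j$ is the $j$-th row of $\alpha$. $\operatorname{div}R_i=\sum_l\partial_lR_{il}$ and $\operatorname{div}(R)$ is the vector $(\operatorname{div}R_1,\operatorname{div}R_2,\operatorname{div}R_3)$. $\nabla R_i$ is the $3\times3$ gradient matrix of the row $R_i$, and $|\nabla R|^2=\sum_{k,l,m}(\partial_mR_{kl})^2$. $A_{sym}=\frac12(A+A^T)$, $A_{skew}=\frac12(A-A^T)$, $|A|^2=A:A=\mathrm{tr}(A^TA)$. *)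

theory Defs
  imports "HOL-Analysis.Analysis"
begin

type_synonym mat3 = "real^3^3"

definition eps :: "3 \<Rightarrow> 3 \<Rightarrow> 3 \<Rightarrow> real" where
  "eps i j k = (if i = j \<or> j = k \<or> i = k then 0
     else if (i, j, k) \<in> {(1,2,3), (2,3,1), (3,1,2)} then 1 else -1)"

definition pd :: "3 \<Rightarrow> (real^3 \<Rightarrow> 'b::real_normed_vector) \<Rightarrow> real^3 \<Rightarrow> 'b" where
  "pd k f = (\<lambda>x. frechet_derivative f (at x) (axis k 1))"

definition C2_on :: "(real^3) set \<Rightarrow> (real^3 \<Rightarrow> 'b::real_normed_vector) \<Rightarrow> bool" where
  "C2_on \<Omega> f \<longleftrightarrow> f differentiable_on \<Omega> \<and>
     (\<forall>k. pd k f differentiable_on \<Omega>) \<and>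
     (\<forall>k l. continuous_on \<Omega> (pd l (pd k f)))"

definition SO3 :: "mat3 set" where
  "SO3 = {Q. orthogonal_matrix Q \<and> det Q = 1}"

definition curlM :: "(real^3 \<Rightarrow> mat3) \<Rightarrow> real^3 \<Rightarrow> mat3" where
  "curlM R x = (\<chi> i j. \<Sum>k\<in>UNIV. \<Sum>l\<in>UNIV. eps j k l * (pd k R x $ i $ l))"

definition divM :: "(real^3 \<Rightarrow> mat3) \<Rightarrow> real^3 \<Rightarrow> real^3" where
  "divM R x = (\<chi> i. \<Sum>l\<in>UNIV. pd l R x $ i $ l)"

definition gradRow :: "(real^3 \<Rightarrow> mat3) \<Rightarrow> 3 \<Rightarrow> real^3 \<Rightarrow> mat3" where
  "gradRow R i x = (\<chi> l m. pd m R x $ i $ l)"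

definition grad :: "(real^3 \<Rightarrow> real) \<Rightarrow> real^3 \<Rightarrow> real^3" where
  "grad f x = (\<chi> m. pd m f x)"

definition fnorm2 :: "mat3 \<Rightarrow> real" where
  "fnorm2 A = trace (transpose A ** A)"

definition msym :: "mat3 \<Rightarrow> mat3" where
  "msym A = (1/2) *\<^sub>R (A + transpose A)"

definition mskew :: "mat3 \<Rightarrow> mat3" where
  "mskew A = (1/2) *\<^sub>R (A - transpose A)"

end

theory Submission
  imports Defs
begin

lemma U3: "(UNIV::3 set) = {1,2,3}"
  using exhaust_3 by auto
lemma sum3: "(\<Sum>i\<in>(UNIV::3 set). f i) = f 1 + f 2 + f 3"
  unfolding U3 by (simp add: add.assoc)
lemma eps_vals:
  "eps 1 1 1 = 0" "eps 1 1 2 = 0" "eps 1 1 3 = 0" "eps 1 2 1 = 0" "eps 1 2 2 = 0" "eps 1 2 3 = 1"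
  "eps 1 3 1 = 0" "eps 1 3 2 = -1" "eps 1 3 3 = 0"
  "eps 2 1 1 = 0" "eps 2 1 2 = 0" "eps 2 1 3 = -1" "eps 2 2 1 = 0" "eps 2 2 2 = 0" "eps 2 2 3 = 0"
  "eps 2 3 1 = 1" "eps 2 3 2 = 0" "eps 2 3 3 = 0"
  "eps 3 1 1 = 0" "eps 3 1 2 = 1" "eps 3 1 3 = 0" "eps 3 2 1 = -1" "eps 3 2 2 = 0" "eps 3 2 3 = 0"
  "eps 3 3 1 = 0" "eps 3 3 2 = 0" "eps 3 3 3 = 0"
  by (simp_all add: eps_def)
lemma delta_sum: "(\<Sum>u\<in>(UNIV::3 set). (if i = u then 1 else 0) * f u) = (f i :: real)"
proof -
  have "(\<Sum>u\<in>(UNIV::3 set). (if i = u then 1 else 0) * f u) = (\<Sum>u\<in>(UNIV::3 set). (if i = u then f u else 0))"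
    by (rule sum.cong) auto
  then show ?thesis by simp
qed

lemma so3_rows:
  assumes "Q \<in> SO3"
  shows "(\<Sum>l\<in>UNIV. Q$i$l * Q$j$l) = (if i = j then 1 else 0)"
proof -
  have "Q ** transpose Q = mat 1" using assms unfolding SO3_def orthogonal_matrix_def by auto
  then have "(Q ** transpose Q)$i$j = mat 1 $i$j" by simp
  then show ?thesis by (simp add: matrix_matrix_mult_def transpose_def mat_def)
qed

lemma so3_cols:
  assumes "Q \<in> SO3"
  shows "(\<Sum>l\<in>UNIV. Q$l$i * Q$l$j) = (if i = j then 1 else 0)"
proof -
  have "transpose Q ** Q = mat 1" using assms unfolding SO3_def orthogonal_matrix_def by auto
  then have "(transpose Q ** Q)$i$j = mat 1 $i$j" by simp
  then show ?thesis by (simp add: matrix_matrix_mult_def transpose_def mat_def)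
qed

lemma levi_det:
  fixes Q :: "real^3^3"
  shows "(\<Sum>i\<in>UNIV. \<Sum>j\<in>UNIV. \<Sum>k\<in>UNIV. eps i j k * Q$i$u * Q$j$s * Q$k$t) = det Q * eps u s t"
  using exhaust_3[of u] exhaust_3[of s] exhaust_3[of t]
  by (auto simp: sum3 eps_vals det_3 algebra_simps)

lemma re0:
  fixes x :: "3 \<Rightarrow> 3 \<Rightarrow> real" and e :: "3 \<Rightarrow> 3 \<Rightarrow> 3 \<Rightarrow> real"
  shows "(\<Sum>u\<in>UNIV. x i u * (\<Sum>i'\<in>UNIV. \<Sum>j\<in>UNIV. \<Sum>k\<in>UNIV. e i' j k * x i' u * y j * z k))
    = (\<Sum>i'\<in>UNIV. (\<Sum>u\<in>UNIV. x i u * x i' u) * (\<Sum>j\<in>UNIV. \<Sum>k\<in>UNIV. e i' j k * y j * z k))"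
  by (simp only: sum3 ring_distribs) (simp only: ac_simps)

lemma so3_cof:
  assumes "Q \<in> SO3"
  shows "(\<Sum>j\<in>UNIV. \<Sum>k\<in>UNIV. eps i j k * Q$j$s * Q$k$t) = (\<Sum>c\<in>UNIV. eps c s t * Q$i$c)"
proof -
  have d: "det Q = 1" using assms unfolding SO3_def by auto
  have "(\<Sum>c\<in>UNIV. eps c s t * Q$i$c) = (\<Sum>u\<in>UNIV. Q$i$u * eps u s t)"
    by (simp add: mult.commute)
  also have "\<dots> = (\<Sum>u\<in>UNIV. Q$i$u * (\<Sum>i'\<in>UNIV. \<Sum>j\<in>UNIV. \<Sum>k\<in>UNIV. eps i' j k * Q$i'$u * Q$j$s * Q$k$t))"
    by (simp add: levi_det d)
  also have "\<dots> = (\<Sum>i'\<in>UNIV. (\<Sum>u\<in>UNIV. Q$i$u * Q$i'$u) * (\<Sum>j\<in>UNIV. \<Sum>k\<in>UNIV. eps i' j k * Q$j$s * Q$k$t))"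
    using re0[of "\<lambda>a b. Q$a$b" i eps "\<lambda>j. Q$j$s" "\<lambda>k. Q$k$t"] by simp
  also have "\<dots> = (\<Sum>j\<in>UNIV. \<Sum>k\<in>UNIV. eps i j k * Q$j$s * Q$k$t)"
    by (simp add: so3_rows[OF assms] delta_sum)
  finally show ?thesis by simp
qed

lemma pd_eqI: "(f has_derivative f') (at x) \<Longrightarrow> pd k f x = f' (axis k 1)"
  unfolding pd_def using frechet_derivative_at by metis

lemma hasD: "f differentiable (at x) \<Longrightarrow> (f has_derivative frechet_derivative f (at x)) (at x)"
  using frechet_derivative_works by blast

lemma has_nth: "F differentiable (at x) \<Longrightarrow> ((\<lambda>y. F y $ i) has_derivative (\<lambda>h. frechet_derivative F (at x) h $ i)) (at x)"
  using bounded_linear.has_derivative[OF bounded_linear_vec_nth hasD] by blast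

lemma diff_nth: "F differentiable (at x) \<Longrightarrow> (\<lambda>y. F y $ i) differentiable (at x)"
  using has_nth differentiable_def by blast

lemma pd_nth: "F differentiable (at x) \<Longrightarrow> pd k (\<lambda>y. F y $ i) x = pd k F x $ i"
  using pd_eqI[OF has_nth] unfolding pd_def by blast

lemma diff_nth2: "F differentiable (at x) \<Longrightarrow> (\<lambda>y. F y $ i $ j) differentiable (at x)"
proof -
  assume a: "F differentiable (at x)"
  have "(\<lambda>y. F y $ i) differentiable (at x)" by (rule diff_nth[OF a])
  from diff_nth[OF this, of j] show ?thesis by simp
qed

lemma pd_nth2: "F differentiable (at x) \<Longrightarrow> pd k (\<lambda>y. F y $ i $ j) x = pd k F x $ i $ j"
proof -
  assume a: "F differentiable (at x)"
  have d: "(\<lambda>y. F y $ i) differentiable (at x)" by (rule diff_nth[OF a])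
  have "pd k (\<lambda>y. (\<lambda>y. F y $ i) y $ j) x = pd k (\<lambda>y. F y $ i) x $ j" by (rule pd_nth[OF d])
  also have "\<dots> = pd k F x $ i $ j" using pd_nth[OF a, of k i] by simp
  finally show ?thesis by simp
qed

lemma pd_transform:
  assumes "open S" "x \<in> S" "f differentiable (at x)" "\<And>y. y \<in> S \<Longrightarrow> f y = g y"
  shows "pd k g x = pd k f x" "g differentiable (at x)"
proof -
  have "(g has_derivative frechet_derivative f (at x)) (at x)"
    using has_derivative_transform_within_open[OF hasD[OF assms(3)] assms(1,2)] assms(4) by blast
  then show "pd k g x = pd k f x" "g differentiable (at x)"
    using pd_eqI unfolding pd_def differentiable_def by blast+
qed

lemma pd_const_on:
  assumes "open S" "x \<in> S" "\<And>y. y \<in> S \<Longrightarrow> f y = c"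
  shows "pd k f x = 0"
proof -
  have "pd k f x = pd k (\<lambda>y. c) x"
    by (rule pd_transform(1)[OF assms(1,2)]) (use assms(3) in auto)
  then show ?thesis unfolding pd_def by simp
qed

lemma re1:
  fixes e x M b :: "3 \<Rightarrow> 3 \<Rightarrow> real"
  shows "(\<Sum>j\<in>UNIV. \<Sum>k\<in>UNIV. e j k * (\<Sum>p\<in>UNIV. (\<Sum>a\<in>UNIV. x j a * M a p) * (\<Sum>s\<in>UNIV. x k s * b s p)))
   = (\<Sum>a\<in>UNIV. \<Sum>s\<in>UNIV. (\<Sum>j\<in>UNIV. \<Sum>k\<in>UNIV. e j k * x j a * x k s) * (\<Sum>p\<in>UNIV. M a p * b s p))"
  by (simp only: sum3 ring_distribs) (simp only: ac_simps)

lemma re2: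
  fixes r :: "3 \<Rightarrow> 3 \<Rightarrow> real" and e :: "3 \<Rightarrow> 3 \<Rightarrow> 3 \<Rightarrow> real" and X :: "3 \<Rightarrow> 3 \<Rightarrow> 3 \<Rightarrow> real"
  shows "(\<Sum>i\<in>UNIV. \<Sum>l\<in>UNIV. r i l * (\<Sum>a\<in>UNIV. \<Sum>s\<in>UNIV. (\<Sum>c\<in>UNIV. e c a s * r i c) * X l a s))
   = (\<Sum>l\<in>UNIV. \<Sum>c\<in>UNIV. (\<Sum>i\<in>UNIV. r i l * r i c) * (\<Sum>a\<in>UNIV. \<Sum>s\<in>UNIV. e c a s * X l a s))"
  by (simp only: sum3 ring_distribs) (simp only: ac_simps)

lemma alg:
  fixes r :: "3\<Rightarrow>3\<Rightarrow>real" and g :: "3\<Rightarrow>3\<Rightarrow>3\<Rightarrow>real" and al :: "3\<Rightarrow>3\<Rightarrow>real"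
  assumes rows: "\<And>i j. (\<Sum>l\<in>UNIV. r i l * r j l) = (if i = j then 1 else 0)"
    and cols: "\<And>i j. (\<Sum>l\<in>UNIV. r l i * r l j) = (if i = j then 1 else 0)"
    and cof: "\<And>i s t. (\<Sum>j\<in>UNIV. \<Sum>k\<in>UNIV. eps i j k * r j s * r k t) = (\<Sum>c\<in>UNIV. eps c s t * r i c)"
    and sk: "\<And>m j k. (\<Sum>i\<in>UNIV. g m i j * r i k + r i j * g m i k) = 0"
    and alpha: "\<And>i j. al i j = (\<Sum>k\<in>UNIV. \<Sum>l\<in>UNIV. eps j k l * g k i l)"
  shows "\<And>i. (\<Sum>l\<in>UNIV. g l i l) = (\<Sum>j\<in>UNIV. \<Sum>k\<in>UNIV. eps i j k * (\<Sum>p\<in>UNIV. al j p * r k p))"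
    and "(\<Sum>i\<in>UNIV. \<Sum>l\<in>UNIV. r i l * (\<Sum>j\<in>UNIV. \<Sum>k\<in>UNIV. eps i j k * (\<Sum>p\<in>UNIV. al j p * g l k p)))
       = (\<Sum>a\<in>UNIV. \<Sum>b\<in>UNIV. (\<Sum>i\<in>UNIV. r i a * al i b) * (\<Sum>i\<in>UNIV. r i b * al i a))"
proof -
  define a where "a m p l = (\<Sum>i\<in>UNIV. r i p * g m i l)" for m p l
  have ask: "a m p l = - a m l p" for m p l
  proof -
    have "(\<Sum>i\<in>UNIV. g m i l * r i p + r i l * g m i p) = 0" by (rule sk)
    then show ?thesis unfolding a_def by (simp add: sum.distrib mult.commute)
  qed
  have a0: "a m p p = 0" for m p using ask[of m p p] by simp
  have a21: "a m 2 1 = - a m 1 2" "a m 3 1 = - a m 1 3" "a m 3 2 = - a m 2 3" for m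
    using ask[of m 2 1] ask[of m 3 1] ask[of m 3 2] by simp_all
  have S1: "g m i l = (\<Sum>p\<in>UNIV. r i p * a m p l)" for m i l
  proof -
    have "(\<Sum>p\<in>UNIV. r i p * a m p l) = (\<Sum>p\<in>UNIV. \<Sum>i'\<in>UNIV. r i p * r i' p * g m i' l)"
      unfolding a_def by (simp add: sum_distrib_left mult.assoc)
    also have "\<dots> = (\<Sum>i'\<in>UNIV. (\<Sum>p\<in>UNIV. r i p * r i' p) * g m i' l)"
      by (simp add: sum_distrib_right) (rule sum.swap)
    also have "\<dots> = g m i l" by (simp add: rows delta_sum)
    finally show ?thesis by simp
  qed
  define M where "M a' q = (\<Sum>i\<in>UNIV. r i a' * al i q)" for a' q
  have M_eq: "M a' q = (\<Sum>k\<in>UNIV. \<Sum>l\<in>UNIV. eps q k l * a k a' l)" for a' q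
  proof -
    have "M a' q = (\<Sum>i\<in>UNIV. \<Sum>k\<in>UNIV. \<Sum>l\<in>UNIV. eps q k l * (r i a' * g k i l))"
      unfolding M_def alpha by (simp add: sum_distrib_left mult_ac)
    also have "\<dots> = (\<Sum>k\<in>UNIV. \<Sum>l\<in>UNIV. \<Sum>i\<in>UNIV. eps q k l * (r i a' * g k i l))"
      by (simp only: sum3 ac_simps)
    also have "\<dots> = (\<Sum>k\<in>UNIV. \<Sum>l\<in>UNIV. eps q k l * a k a' l)"
      unfolding a_def by (simp add: sum_distrib_left)
    finally show ?thesis .
  qed
  have al_eq: "al j q = (\<Sum>a'\<in>UNIV. r j a' * M a' q)" for j q
  proof -
    have "(\<Sum>a'\<in>UNIV. r j a' * M a' q) = (\<Sum>a'\<in>UNIV. \<Sum>i\<in>UNIV. r j a' * r i a' * al i q)"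
      unfolding M_def by (simp add: sum_distrib_left mult.assoc)
    also have "\<dots> = (\<Sum>i\<in>UNIV. (\<Sum>a'\<in>UNIV. r j a' * r i a') * al i q)"
      by (simp add: sum_distrib_right) (rule sum.swap)
    also have "\<dots> = al j q" by (simp add: rows delta_sum)
    finally show ?thesis by simp
  qed
  show "(\<Sum>l\<in>UNIV. g l i l) = (\<Sum>j\<in>UNIV. \<Sum>k\<in>UNIV. eps i j k * (\<Sum>p\<in>UNIV. al j p * r k p))" for i
  proof -
    have "(\<Sum>j\<in>UNIV. \<Sum>k\<in>UNIV. eps i j k * (\<Sum>p\<in>UNIV. al j p * r k p))
        = (\<Sum>j\<in>UNIV. \<Sum>k\<in>UNIV. eps i j k * (\<Sum>p\<in>UNIV. (\<Sum>a'\<in>UNIV. r j a' * M a' p) * r k p))"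
      by (simp add: al_eq)
    also have "\<dots> = (\<Sum>a'\<in>UNIV. \<Sum>p\<in>UNIV. M a' p * (\<Sum>j\<in>UNIV. \<Sum>k\<in>UNIV. eps i j k * r j a' * r k p))"
      by (simp only: sum3 ring_distribs) (simp only: ac_simps)
    also have "\<dots> = (\<Sum>a'\<in>UNIV. \<Sum>p\<in>UNIV. M a' p * (\<Sum>c\<in>UNIV. eps c a' p * r i c))"
      by (simp add: cof)
    also have "\<dots> = (\<Sum>c\<in>UNIV. r i c * (\<Sum>a'\<in>UNIV. \<Sum>p\<in>UNIV. eps c a' p * M a' p))"
      by (simp only: sum3 ring_distribs) (simp only: ac_simps)
    also have "\<dots> = (\<Sum>c\<in>UNIV. r i c * (\<Sum>l\<in>UNIV. a l c l))"
    proof (rule sum.cong[OF refl])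
      fix c :: 3
      have "(\<Sum>a'\<in>UNIV. \<Sum>p\<in>UNIV. eps c a' p * M a' p) = (\<Sum>l\<in>UNIV. a l c l)"
        unfolding M_eq
        using exhaust_3[of c] by (auto simp: sum3 eps_vals a0 a21)
      then show "r i c * (\<Sum>a'\<in>UNIV. \<Sum>p\<in>UNIV. eps c a' p * M a' p) = r i c * (\<Sum>l\<in>UNIV. a l c l)"
        by simp
    qed
    also have "\<dots> = (\<Sum>l\<in>UNIV. g l i l)"
      unfolding S1 by (simp add: sum_distrib_left mult.assoc) (rule sum.swap)
    finally show ?thesis by simp
  qed
  show "(\<Sum>i\<in>UNIV. \<Sum>l\<in>UNIV. r i l * (\<Sum>j\<in>UNIV. \<Sum>k\<in>UNIV. eps i j k * (\<Sum>p\<in>UNIV. al j p * g l k p)))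
       = (\<Sum>a\<in>UNIV. \<Sum>b\<in>UNIV. (\<Sum>i\<in>UNIV. r i a * al i b) * (\<Sum>i\<in>UNIV. r i b * al i a))"
  proof -
    have "(\<Sum>i\<in>UNIV. \<Sum>l\<in>UNIV. r i l * (\<Sum>j\<in>UNIV. \<Sum>k\<in>UNIV. eps i j k * (\<Sum>p\<in>UNIV. al j p * g l k p)))
      = (\<Sum>i\<in>UNIV. \<Sum>l\<in>UNIV. r i l * (\<Sum>j\<in>UNIV. \<Sum>k\<in>UNIV. eps i j k * (\<Sum>p\<in>UNIV. (\<Sum>a'\<in>UNIV. r j a' * M a' p) * (\<Sum>s\<in>UNIV. r k s * a l s p))))"
      by (simp add: al_eq S1[of l _ p for l p])
    also have "\<dots> = (\<Sum>i\<in>UNIV. \<Sum>l\<in>UNIV. r i l * (\<Sum>a'\<in>UNIV. \<Sum>s\<in>UNIV. (\<Sum>j\<in>UNIV. \<Sum>k\<in>UNIV. eps i j k * r j a' * r k s) * (\<Sum>p\<in>UNIV. M a' p * a l s p)))"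
      by (simp only: re1)
    also have "\<dots> = (\<Sum>i\<in>UNIV. \<Sum>l\<in>UNIV. r i l * (\<Sum>a'\<in>UNIV. \<Sum>s\<in>UNIV. (\<Sum>c\<in>UNIV. eps c a' s * r i c) * (\<Sum>p\<in>UNIV. M a' p * a l s p)))"
      by (simp only: cof)
    also have "\<dots> = (\<Sum>l\<in>UNIV. \<Sum>c\<in>UNIV. (\<Sum>i\<in>UNIV. r i l * r i c) * (\<Sum>a'\<in>UNIV. \<Sum>s\<in>UNIV. eps c a' s * (\<Sum>p\<in>UNIV. M a' p * a l s p)))"
      by (rule re2)
    also have "\<dots> = (\<Sum>l\<in>UNIV. \<Sum>a'\<in>UNIV. \<Sum>s\<in>UNIV. eps l a' s * (\<Sum>p\<in>UNIV. M a' p * a l s p))"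
      by (simp add: cols delta_sum)
    also have "\<dots> = (\<Sum>a\<in>UNIV. \<Sum>b\<in>UNIV. M a b * M b a)"
      unfolding M_eq by (simp add: sum3 eps_vals a0 a21 algebra_simps)
    also have "\<dots> = (\<Sum>a\<in>UNIV. \<Sum>b\<in>UNIV. (\<Sum>i\<in>UNIV. r i a * al i b) * (\<Sum>i\<in>UNIV. r i b * al i a))"
      unfolding M_def ..
    finally show ?thesis .
  qed
qed


lemma schwarz_approx:
  fixes f :: "'a::real_normed_vector \<Rightarrow> real"
  assumes S: "open S" "x \<in> S" and fd: "\<And>y. y \<in> S \<Longrightarrow> f differentiable (at y)"
    and du: "((\<lambda>y. frechet_derivative f (at y) u) has_derivative L) (at x)"
    and e: "e > 0"
  shows "\<exists>d>0. \<forall>h. 0 < h \<and> h < d \<longrightarrow>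
     \<bar>(f (x + h *\<^sub>R u + h *\<^sub>R v) - f (x + h *\<^sub>R u) - f (x + h *\<^sub>R v) + f x) - h^2 * L v\<bar> \<le> e * h^2"
proof -
  define fu where "fu y = frechet_derivative f (at y) u" for y
  define N where "N = norm u + norm v + 1"
  have N: "N \<ge> 1" "norm u \<le> N" "norm v \<le> N" "norm u + norm v \<le> N" unfolding N_def by auto
  have bl: "bounded_linear L" using du by (simp add: has_derivative_bounded_linear)
  define e' where "e' = e / (2 * N)"
  have e': "e' > 0" using e N unfolding e'_def by auto
  obtain d1 where d1: "d1 > 0" "\<And>y. norm (y - x) < d1 \<Longrightarrow> \<bar>fu y - fu x - L (y - x)\<bar> \<le> e' * norm (y - x)"
    using du e' unfolding has_derivative_at_alt fu_def[symmetric] by (metis real_norm_def)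
  obtain d0 where d0: "d0 > 0" "ball x d0 \<subseteq> S" using S openE by blast
  define d where "d = min d0 d1 / N"
  have d: "d > 0" using d0 d1 N unfolding d_def by auto
  have "\<forall>h. 0 < h \<and> h < d \<longrightarrow>
     \<bar>(f (x + h *\<^sub>R u + h *\<^sub>R v) - f (x + h *\<^sub>R u) - f (x + h *\<^sub>R v) + f x) - h^2 * L v\<bar> \<le> e * h^2"
  proof (intro allI impI)
    fix h :: real assume h: "0 < h \<and> h < d"
    have "h * N < min d0 d1" using h N unfolding d_def by (simp add: less_divide_eq)
    then have hN: "h * N < d0" "h * N < d1" by auto
    have inS: "x + t *\<^sub>R u + s *\<^sub>R v \<in> S" if "0 \<le> t" "t \<le> h" "0 \<le> s" "s \<le> h" for t s
    proof -
      have "norm (t *\<^sub>R u + s *\<^sub>R v) \<le> t * norm u + s * norm v"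
        using that norm_triangle_ineq[of "t *\<^sub>R u" "s *\<^sub>R v"] by simp
      also have "\<dots> \<le> h * norm u + h * norm v"
        using that by (intro add_mono mult_right_mono) auto
      also have "\<dots> \<le> h * N" using N h by (simp add: distrib_left[symmetric])
      finally have "norm (t *\<^sub>R u + s *\<^sub>R v) < d0" using hN by linarith
      moreover have "dist x (x + t *\<^sub>R u + s *\<^sub>R v) = norm (t *\<^sub>R u + s *\<^sub>R v)"
        by (metis add.assoc add_diff_cancel_left' dist_norm dist_commute)
      ultimately have "x + t *\<^sub>R u + s *\<^sub>R v \<in> ball x d0" by simp
      then show ?thesis using d0 by blast
    qed
    define \<phi> where "\<phi> t = f (x + t *\<^sub>R u + h *\<^sub>R v) - f (x + t *\<^sub>R u)" for t
    have der: "(\<phi> has_derivative (\<lambda>s. s * (fu (x + t *\<^sub>R u + h *\<^sub>R v) - fu (x + t *\<^sub>R u)))) (at t within {0..h})"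
      if "0 \<le> t" "t \<le> h" for t
    proof -
      have g1: "((\<lambda>t. x + t *\<^sub>R u + c) has_derivative (\<lambda>s. s *\<^sub>R u)) (at t within {0..h})" for c
        by (auto intro!: derivative_eq_intros)
      have D: "(f has_derivative frechet_derivative f (at y)) (at y)" if "y \<in> S" for y
        using fd[OF that] frechet_derivative_works by blast
      have c1: "((\<lambda>t. f (x + t *\<^sub>R u + h *\<^sub>R v)) has_derivative (\<lambda>s. frechet_derivative f (at (x + t *\<^sub>R u + h *\<^sub>R v)) (s *\<^sub>R u))) (at t within {0..h})"
        by (rule has_derivative_compose[OF g1 D]) (use inS[of t h] that h in auto)
      have c2: "((\<lambda>t. f (x + t *\<^sub>R u + 0)) has_derivative (\<lambda>s. frechet_derivative f (at (x + t *\<^sub>R u + 0)) (s *\<^sub>R u))) (at t within {0..h})"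
        by (rule has_derivative_compose[OF g1 D]) (use inS[of t 0] that h in auto)
      have lin: "frechet_derivative f (at y) (s *\<^sub>R u) = s * fu y" if "y \<in> S" for y s
      proof -
        have "linear (frechet_derivative f (at y))"
          using D[OF that] has_derivative_linear by blast
        then show ?thesis unfolding fu_def by (simp add: linear_scale)
      qed
      have "((\<lambda>t. f (x + t *\<^sub>R u + h *\<^sub>R v) - f (x + t *\<^sub>R u + 0)) has_derivative
          (\<lambda>s. frechet_derivative f (at (x + t *\<^sub>R u + h *\<^sub>R v)) (s *\<^sub>R u) - frechet_derivative f (at (x + t *\<^sub>R u + 0)) (s *\<^sub>R u))) (at t within {0..h})"
        by (rule has_derivative_diff[OF c1 c2])
      moreover have "(\<lambda>s. frechet_derivative f (at (x + t *\<^sub>R u + h *\<^sub>R v)) (s *\<^sub>R u) - frechet_derivative f (at (x + t *\<^sub>R u + 0)) (s *\<^sub>R u))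
          = (\<lambda>s. s * (fu (x + t *\<^sub>R u + h *\<^sub>R v) - fu (x + t *\<^sub>R u)))"
        using lin inS[of t h] inS[of t 0] that h by (auto simp: algebra_simps)
      ultimately show ?thesis unfolding \<phi>_def by simp
    qed
    obtain \<xi> where \<xi>: "\<xi> \<in> {0<..<h}" "\<phi> h - \<phi> 0 = (h - 0) * (fu (x + \<xi> *\<^sub>R u + h *\<^sub>R v) - fu (x + \<xi> *\<^sub>R u))"
      using mvt_simple[of 0 h \<phi>, OF _ der] h by auto
    have Delta: "f (x + h *\<^sub>R u + h *\<^sub>R v) - f (x + h *\<^sub>R u) - f (x + h *\<^sub>R v) + f x = \<phi> h - \<phi> 0"
      unfolding \<phi>_def by simp
    define w1 where "w1 = \<xi> *\<^sub>R u + h *\<^sub>R v"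
    define w2 where "w2 = \<xi> *\<^sub>R u"
    have nw1: "norm w1 \<le> h * N"
    proof -
      have "norm w1 \<le> \<xi> * norm u + h * norm v"
        using \<xi> norm_triangle_ineq[of "\<xi> *\<^sub>R u" "h *\<^sub>R v"] h unfolding w1_def by simp
      also have "\<dots> \<le> h * norm u + h * norm v"
        using \<xi> by (intro add_mono mult_right_mono) auto
      also have "\<dots> \<le> h * N" using N h by (simp add: distrib_left[symmetric])
      finally show ?thesis .
    qed
    have nw2: "norm w2 \<le> h * N"
    proof -
      have "norm w2 \<le> h * norm u" using \<xi> unfolding w2_def by (auto intro: mult_right_mono)
      also have "\<dots> \<le> h * N" using N h by (intro mult_left_mono) auto
      finally show ?thesis .
    qed
    have b1: "\<bar>fu (x + w1) - fu x - L w1\<bar> \<le> e' * (h * N)"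
      using d1(2)[of "x + w1"] nw1 hN e' by (smt (verit, ccfv_SIG) add_diff_cancel_left' mult_left_mono)
    have b2: "\<bar>fu (x + w2) - fu x - L w2\<bar> \<le> e' * (h * N)"
      using d1(2)[of "x + w2"] nw2 hN e' by (smt (verit, ccfv_SIG) add_diff_cancel_left' mult_left_mono)
    have Lw: "L w1 - L w2 = h * L v"
      unfolding w1_def w2_def using bl by (simp add: linear_simps bounded_linear.linear)
    have "\<bar>(fu (x + w1) - fu (x + w2)) - h * L v\<bar> \<le> 2 * e' * (h * N)"
      using b1 b2 Lw by linarith
    also have "\<dots> = e * h" unfolding e'_def using N by (simp add: field_simps)
    finally have key: "\<bar>(fu (x + w1) - fu (x + w2)) - h * L v\<bar> \<le> e * h" .
    have "\<bar>(\<phi> h - \<phi> 0) - h^2 * L v\<bar> = h * \<bar>(fu (x + w1) - fu (x + w2)) - h * L v\<bar>"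
      using \<xi>(2) h unfolding w1_def w2_def
      by (simp add: add.assoc power2_eq_square abs_mult right_diff_distrib[symmetric] mult.assoc)
    also have "\<dots> \<le> h * (e * h)" using key h by (intro mult_left_mono) auto
    finally show "\<bar>(f (x + h *\<^sub>R u + h *\<^sub>R v) - f (x + h *\<^sub>R u) - f (x + h *\<^sub>R v) + f x) - h^2 * L v\<bar> \<le> e * h^2"
      using Delta by (simp add: power2_eq_square mult_ac)
  qed
  then show ?thesis using d by blast
qed

lemma schwarz:
  fixes f :: "'a::real_normed_vector \<Rightarrow> real"
  assumes S: "open S" "x \<in> S" and fd: "\<And>y. y \<in> S \<Longrightarrow> f differentiable (at y)"
    and du: "(\<lambda>y. frechet_derivative f (at y) u) differentiable (at x)"
    and dv: "(\<lambda>y. frechet_derivative f (at y) v) differentiable (at x)"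
  shows "frechet_derivative (\<lambda>y. frechet_derivative f (at y) u) (at x) v
       = frechet_derivative (\<lambda>y. frechet_derivative f (at y) v) (at x) u"
proof (rule ccontr)
  define Lu where "Lu = frechet_derivative (\<lambda>y. frechet_derivative f (at y) u) (at x)"
  define Lv where "Lv = frechet_derivative (\<lambda>y. frechet_derivative f (at y) v) (at x)"
  assume ne: "\<not> ?thesis"
  define \<delta> where "\<delta> = \<bar>Lu v - Lv u\<bar>"
  have \<delta>: "\<delta> > 0" using ne unfolding \<delta>_def Lu_def Lv_def by auto
  have hu: "((\<lambda>y. frechet_derivative f (at y) u) has_derivative Lu) (at x)"
    unfolding Lu_def using du frechet_derivative_works by blast
  have hv: "((\<lambda>y. frechet_derivative f (at y) v) has_derivative Lv) (at x)"
    unfolding Lv_def using dv frechet_derivative_works by blast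
  obtain d1 where d1: "d1 > 0" "\<And>h. 0 < h \<and> h < d1 \<Longrightarrow>
     \<bar>(f (x + h *\<^sub>R u + h *\<^sub>R v) - f (x + h *\<^sub>R u) - f (x + h *\<^sub>R v) + f x) - h^2 * Lu v\<bar> \<le> (\<delta>/4) * h^2"
    using schwarz_approx[OF S fd hu, of "\<delta>/4" v] \<delta> by auto
  obtain d2 where d2: "d2 > 0" "\<And>h. 0 < h \<and> h < d2 \<Longrightarrow>
     \<bar>(f (x + h *\<^sub>R v + h *\<^sub>R u) - f (x + h *\<^sub>R v) - f (x + h *\<^sub>R u) + f x) - h^2 * Lv u\<bar> \<le> (\<delta>/4) * h^2"
    using schwarz_approx[OF S fd hv, of "\<delta>/4" u] \<delta> by auto
  define h where "h = min d1 d2 / 2"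
  have h: "0 < h" "h < d1" "h < d2" using d1 d2 unfolding h_def by auto
  have sw: "x + h *\<^sub>R v + h *\<^sub>R u = x + h *\<^sub>R u + h *\<^sub>R v" by (simp add: algebra_simps)
  have A: "\<bar>(f (x + h *\<^sub>R u + h *\<^sub>R v) - f (x + h *\<^sub>R u) - f (x + h *\<^sub>R v) + f x) - h^2 * Lu v\<bar> \<le> (\<delta>/4) * h^2"
    using d1(2) h by auto
  have B: "\<bar>(f (x + h *\<^sub>R u + h *\<^sub>R v) - f (x + h *\<^sub>R u) - f (x + h *\<^sub>R v) + f x) - h^2 * Lv u\<bar> \<le> (\<delta>/4) * h^2"
    using d2(2)[of h] h unfolding sw by (simp add: algebra_simps)
  have "h^2 * \<delta> = \<bar>h^2 * Lu v - h^2 * Lv u\<bar>"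
    unfolding \<delta>_def by (simp add: abs_mult right_diff_distrib[symmetric])
  also have "\<dots> \<le> (\<delta>/2) * h^2" using A B by linarith
  finally have "h^2 * \<delta> \<le> (\<delta>/2) * h^2" .
  moreover have "h^2 > 0" using h by simp
  ultimately show False using \<delta> by (simp add: mult.commute)
qed

lemma trace_sq_sym_skew:
  fixes M :: "real^3^3"
  shows "trace (M ** M) = fnorm2 (msym M) - fnorm2 (mskew M)"
  by (simp add: fnorm2_def msym_def mskew_def trace_def matrix_matrix_mult_def transpose_def sum3 algebra_simps power2_eq_square)

lemma norm3: "(norm (v::real^3))^2 = v$1^2 + v$2^2 + v$3^2"
  unfolding power2_norm_eq_inner by (simp add: inner_vec_def sum3 power2_eq_square)

lemma three_sq: "(1/3) * ((a::real) + b + c)^2 \<le> a^2 + b^2 + c^2"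
proof -
  have "3 * (a^2 + b^2 + c^2) - (a + b + c)^2 = (a-b)^2 + (a-c)^2 + (b-c)^2"
    by (simp add: power2_eq_square algebra_simps)
  moreover have "(a-b)^2 + (a-c)^2 + (b-c)^2 \<ge> 0" by simp
  ultimately have "(a + b + c)^2 \<le> 3 * (a^2 + b^2 + c^2)" by linarith
  then show ?thesis by simp
qed

lemma sym_ge:
  fixes G :: "real^3^3"
  shows "fnorm2 (msym G) \<ge> (1/3) * (G$1$1 + G$2$2 + G$3$3)^2"
proof -
  have e: "fnorm2 (msym G) = G$1$1^2 + G$2$2^2 + G$3$3^2 + 2 * ((G$1$2 + G$2$1)/2)^2 + 2 * ((G$1$3 + G$3$1)/2)^2 + 2 * ((G$2$3 + G$3$2)/2)^2"
    by (simp add: fnorm2_def msym_def trace_def matrix_matrix_mult_def transpose_def sum3 power2_eq_square field_simps)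
  have "(1/3) * (G$1$1 + G$2$2 + G$3$3)^2 \<le> G$1$1^2 + G$2$2^2 + G$3$3^2"
    using three_sq[of "G$1$1" "G$2$2" "G$3$3"] by simp
  then show ?thesis unfolding e by (smt (verit) zero_le_power2)
qed

lemma skew_sum:
  fixes g :: "3 \<Rightarrow> 3 \<Rightarrow> 3 \<Rightarrow> real"
  shows "(\<Sum>i\<in>UNIV. fnorm2 (mskew (\<chi> l m. g m i l))) = (1/2) * fnorm2 (\<chi> i j. \<Sum>k\<in>UNIV. \<Sum>l\<in>UNIV. eps j k l * g k i l)"
  by (simp add: fnorm2_def mskew_def trace_def matrix_matrix_mult_def transpose_def sum3 eps_vals algebra_simps power2_eq_square)

lemma div_id:
  fixes \<alpha> :: "real^3^3"
  shows "(norm (\<chi> i. \<Sum>j\<in>UNIV. \<Sum>k\<in>UNIV. eps i j k * (\<alpha> $ j \<bullet> (mat 1 :: real^3^3) $ k)))^2 = 2 * fnorm2 (mskew \<alpha>)"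
  unfolding norm3 by (simp add: fnorm2_def mskew_def trace_def matrix_matrix_mult_def transpose_def mat_def inner_vec_def sum3 eps_vals algebra_simps power2_eq_square)


lemma pd_add:
  assumes "f differentiable (at x)" "g differentiable (at x)"
  shows "pd k (\<lambda>y. f y + g y) x = pd k f x + pd k g x" "(\<lambda>y. f y + g y) differentiable (at x)"
proof -
  have h: "((\<lambda>y. f y + g y) has_derivative (\<lambda>h. frechet_derivative f (at x) h + frechet_derivative g (at x) h)) (at x)"
    by (rule has_derivative_add[OF hasD[OF assms(1)] hasD[OF assms(2)]])
  show "pd k (\<lambda>y. f y + g y) x = pd k f x + pd k g x" using pd_eqI[OF h] unfolding pd_def by simp
  show "(\<lambda>y. f y + g y) differentiable (at x)" using h differentiable_def by blast
qed

lemma pd_mult: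
  fixes f g :: "real^3 \<Rightarrow> real"
  assumes "f differentiable (at x)" "g differentiable (at x)"
  shows "pd k (\<lambda>y. f y * g y) x = f x * pd k g x + pd k f x * g x" "(\<lambda>y. f y * g y) differentiable (at x)"
proof -
  have h: "((\<lambda>y. f y * g y) has_derivative (\<lambda>h. f x * frechet_derivative g (at x) h + frechet_derivative f (at x) h * g x)) (at x)"
    by (rule has_derivative_mult[OF hasD[OF assms(1)] hasD[OF assms(2)]])
  show "pd k (\<lambda>y. f y * g y) x = f x * pd k g x + pd k f x * g x" using pd_eqI[OF h] unfolding pd_def by simp
  show "(\<lambda>y. f y * g y) differentiable (at x)" using h differentiable_def by blast
qed

lemma pd_cmult:
  fixes f :: "real^3 \<Rightarrow> real"
  assumes "f differentiable (at x)"
  shows "pd k (\<lambda>y. c * f y) x = c * pd k f x" "(\<lambda>y. c * f y) differentiable (at x)"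
proof -
  have h: "((\<lambda>y. c * f y) has_derivative (\<lambda>h. c * frechet_derivative f (at x) h)) (at x)"
    by (rule has_derivative_mult_right[OF hasD[OF assms(1)]])
  show "pd k (\<lambda>y. c * f y) x = c * pd k f x" using pd_eqI[OF h] unfolding pd_def by simp
  show "(\<lambda>y. c * f y) differentiable (at x)" using h differentiable_def by blast
qed

lemma pd_sum:
  fixes f :: "'i \<Rightarrow> real^3 \<Rightarrow> real"
  assumes "\<And>a. a \<in> A \<Longrightarrow> f a differentiable (at x)"
  shows "pd k (\<lambda>y. \<Sum>a\<in>A. f a y) x = (\<Sum>a\<in>A. pd k (f a) x)" "(\<lambda>y. \<Sum>a\<in>A. f a y) differentiable (at x)"
proof -
  have h: "((\<lambda>y. \<Sum>a\<in>A. f a y) has_derivative (\<lambda>h. \<Sum>a\<in>A. frechet_derivative (f a) (at x) h)) (at x)"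
    by (rule has_derivative_sum) (rule hasD[OF assms])
  show "pd k (\<lambda>y. \<Sum>a\<in>A. f a y) x = (\<Sum>a\<in>A. pd k (f a) x)" using pd_eqI[OF h] unfolding pd_def by simp
  show "(\<lambda>y. \<Sum>a\<in>A. f a y) differentiable (at x)" using h differentiable_def by blast
qed

lemma contr:
  fixes H :: "3 \<Rightarrow> 3 \<Rightarrow> 3 \<Rightarrow> real"
  assumes "\<And>b n. (\<Sum>k\<in>UNIV. \<Sum>l\<in>UNIV. eps b k l * H n k l) = 0"
  shows "(\<Sum>m\<in>UNIV. H m m l) = (\<Sum>m\<in>UNIV. H m l m)"
proof -
  have "\<And>b n. (\<Sum>k\<in>UNIV. \<Sum>l\<in>UNIV. eps b k l * H n k l) = 0" by (rule assms)
  note A = this[of 1 1] this[of 1 2] this[of 1 3] this[of 2 1] this[of 2 2] this[of 2 3] this[of 3 1] this[of 3 2] this[of 3 3]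
  show ?thesis using exhaust_3[of l] A by (auto simp: sum3 eps_vals)
qed

lemma trace4:
  fixes Q A :: "real^3^3"
  shows "trace (transpose Q ** A ** transpose Q ** A) = (\<Sum>a\<in>UNIV. \<Sum>b\<in>UNIV. (\<Sum>i\<in>UNIV. Q$i$a * A$i$b) * (\<Sum>i\<in>UNIV. Q$i$b * A$i$a))"
proof -
  have "transpose Q ** A ** transpose Q ** A = (transpose Q ** A) ** (transpose Q ** A)"
    by (simp add: matrix_mul_assoc)
  then show ?thesis by (simp add: trace_def matrix_matrix_mult_def transpose_def)
qed



theorem proposition4p3:
  fixes \<Omega> :: "(real^3) set" and R :: "real^3 \<Rightarrow> real^3^3" and \<alpha> :: "real^3^3"
  assumes "open \<Omega>"
    and "C2_on \<Omega> R"
    and "\<forall>x\<in>\<Omega>. R x \<in> SO3"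
    and "\<forall>x\<in>\<Omega>. curlM R x = \<alpha>"
  shows
    "(\<forall>x\<in>\<Omega>. \<forall>i. divM R x $ i = (\<Sum>j\<in>UNIV. \<Sum>k\<in>UNIV. eps i j k * (\<alpha> $ j \<bullet> R x $ k)))
   \<and> (\<forall>x\<in>\<Omega>. \<forall>i. (\<Sum>m\<in>UNIV. pd m (pd m R) x $ i)
          = (\<Sum>j\<in>UNIV. \<Sum>k\<in>UNIV. eps i j k *\<^sub>R grad (\<lambda>y. \<alpha> $ j \<bullet> R y $ k) x))
   \<and> (\<forall>x\<in>\<Omega>. (\<Sum>k\<in>UNIV. \<Sum>l\<in>UNIV. \<Sum>m\<in>UNIV. (pd m R x $ k $ l)^2)
          = - trace (transpose (R x) ** \<alpha> ** transpose (R x) ** \<alpha>))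
   \<and> (\<forall>x\<in>\<Omega>. trace (transpose (R x) ** \<alpha> ** transpose (R x) ** \<alpha>)
          = fnorm2 (msym (transpose (R x) ** \<alpha>)) - fnorm2 (mskew (transpose (R x) ** \<alpha>)))
   \<and> (\<forall>x0\<in>\<Omega>. R x0 = mat 1 \<longrightarrow> (norm (divM R x0))^2 = 2 * fnorm2 (mskew \<alpha>))
   \<and> (\<forall>x\<in>\<Omega>. (\<Sum>i\<in>UNIV. fnorm2 (msym (gradRow R i x))) \<ge> (1/3) * (norm (divM R x))^2)
   \<and> (\<forall>x\<in>\<Omega>. (\<Sum>i\<in>UNIV. fnorm2 (mskew (gradRow R i x))) = (1/2) * fnorm2 \<alpha>)"
proof -
  note Om = assms(1)
  have Rd: "R differentiable (at y)" if "y \<in> \<Omega>" for y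
    using assms(2) Om that unfolding C2_on_def by (auto simp: differentiable_on_eq_differentiable_at)
  have Pd: "pd k R differentiable (at y)" if "y \<in> \<Omega>" for k y
    using assms(2) Om that unfolding C2_on_def by (auto simp: differentiable_on_eq_differentiable_at)
  have SO: "R y \<in> SO3" if "y \<in> \<Omega>" for y using assms(3) that by auto
  have curl: "curlM R y = \<alpha>" if "y \<in> \<Omega>" for y using assms(4) that by auto
  have dent: "(\<lambda>z. R z $ i $ l) differentiable (at y)" if "y \<in> \<Omega>" for y i l
    by (rule diff_nth2[OF Rd[OF that]])
  have ent: "pd k (\<lambda>z. R z $ i $ l) y = pd k R y $ i $ l" if "y \<in> \<Omega>" for k i l y
    by (rule pd_nth2[OF Rd[OF that]])
  have dent2: "(\<lambda>z. pd k R z $ i $ l) differentiable (at y)" if "y \<in> \<Omega>" for y k i l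
    by (rule diff_nth2[OF Pd[OF that]])
  have ent2: "pd n (\<lambda>z. pd k R z $ i $ l) y = pd n (pd k R) y $ i $ l" if "y \<in> \<Omega>" for n k i l y
    by (rule pd_nth2[OF Pd[OF that]])
  have alpha: "\<alpha> $ i $ j = (\<Sum>k\<in>UNIV. \<Sum>l\<in>UNIV. eps j k l * pd k R y $ i $ l)" if "y \<in> \<Omega>" for i j y
  proof -
    have "curlM R y $ i $ j = \<alpha> $ i $ j" using curl[OF that] by simp
    then show ?thesis unfolding curlM_def by simp
  qed
  have sk: "(\<Sum>i\<in>UNIV. pd m R y $ i $ j * R y $ i $ k + R y $ i $ j * pd m R y $ i $ k) = 0"
    if y: "y \<in> \<Omega>" for y m j k
  proof -
    have c: "pd m (\<lambda>z. \<Sum>i\<in>UNIV. R z $ i $ j * R z $ i $ k) y = 0"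
      by (rule pd_const_on[OF Om y, of _ "if j = k then 1 else 0"]) (use so3_cols SO in auto)
    have "pd m (\<lambda>z. \<Sum>i\<in>UNIV. R z $ i $ j * R z $ i $ k) y = (\<Sum>i\<in>UNIV. pd m (\<lambda>z. R z $ i $ j * R z $ i $ k) y)"
      by (rule pd_sum) (intro pd_mult(2) dent y)
    also have "\<dots> = (\<Sum>i\<in>UNIV. R y $ i $ j * pd m R y $ i $ k + pd m R y $ i $ j * R y $ i $ k)"
      by (simp add: pd_mult(1)[OF dent[OF y] dent[OF y]] ent[OF y])
    finally show ?thesis using c by (simp add: algebra_simps)
  qed
  have inner_eq: "a \<bullet> (b::real^3) = (\<Sum>p\<in>UNIV. a $ p * b $ p)" for a b
    by (simp add: inner_vec_def)
  have P1s: "(\<Sum>l\<in>UNIV. pd l R y $ i $ l) = (\<Sum>j\<in>UNIV. \<Sum>k\<in>UNIV. eps i j k * (\<Sum>p\<in>UNIV. \<alpha> $ j $ p * R y $ k $ p))"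
    if y: "y \<in> \<Omega>" for y i
    using alg(1)[where r = "\<lambda>i l. R y $ i $ l" and g = "\<lambda>m i l. pd m R y $ i $ l" and al = "\<lambda>i j. \<alpha> $ i $ j",
        OF so3_rows[OF SO[OF y]] so3_cols[OF SO[OF y]] so3_cof[OF SO[OF y]] sk[OF y] alpha[OF y]] by simp
  have P1: "divM R y $ i = (\<Sum>j\<in>UNIV. \<Sum>k\<in>UNIV. eps i j k * (\<alpha> $ j \<bullet> R y $ k))" if y: "y \<in> \<Omega>" for y i
    using P1s[OF y, of i] by (simp add: divM_def inner_eq)
  have dinner: "(\<lambda>z. \<alpha> $ j \<bullet> R z $ k) differentiable (at y)" if y: "y \<in> \<Omega>" for y j k
    unfolding inner_eq by (intro pd_sum(2) pd_cmult(2) dent y)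
  have pdinner: "pd n (\<lambda>z. \<alpha> $ j \<bullet> R z $ k) y = (\<Sum>p\<in>UNIV. \<alpha> $ j $ p * pd n R y $ k $ p)" if y: "y \<in> \<Omega>" for y j k n
    unfolding inner_eq
    by (simp add: pd_sum(1) pd_cmult pd_cmult(2) dent[OF y] ent[OF y])
  have F5a: "(\<Sum>k\<in>UNIV. \<Sum>l\<in>UNIV. eps b k l * pd n (pd k R) x $ i $ l) = 0" if x: "x \<in> \<Omega>" for x b n i
  proof -
    have c: "pd n (\<lambda>z. \<Sum>k\<in>UNIV. \<Sum>l\<in>UNIV. eps b k l * pd k R z $ i $ l) x = 0"
      by (rule pd_const_on[OF Om x, of _ "\<alpha> $ i $ b"]) (use alpha in auto)
    have "pd n (\<lambda>z. \<Sum>k\<in>UNIV. \<Sum>l\<in>UNIV. eps b k l * pd k R z $ i $ l) x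
        = (\<Sum>k\<in>UNIV. \<Sum>l\<in>UNIV. eps b k l * pd n (\<lambda>z. pd k R z $ i $ l) x)"
      by (simp add: pd_sum pd_sum(2) pd_cmult pd_cmult(2) dent2[OF x])
    then show ?thesis using c by (simp add: ent2[OF x])
  qed
  have Sw: "pd n (pd k R) x $ i $ l = pd k (pd n R) x $ i $ l" if x: "x \<in> \<Omega>" for x n k i l
  proof -
    define f where "f = (\<lambda>z. R z $ i $ l)"
    have fd: "\<And>y. y \<in> \<Omega> \<Longrightarrow> f differentiable (at y)" unfolding f_def by (rule dent)
    have pk: "pd k f differentiable (at x)" "pd n (pd k f) x = pd n (\<lambda>z. pd k R z $ i $ l) x"
      using pd_transform[OF Om x dent2[OF x, of k i l], of "pd k f"] ent unfolding f_def by auto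
    have pn: "pd n f differentiable (at x)" "pd k (pd n f) x = pd k (\<lambda>z. pd n R z $ i $ l) x"
      using pd_transform[OF Om x dent2[OF x, of n i l], of "pd n f"] ent unfolding f_def by auto
    have "pd n (pd k f) x = pd k (pd n f) x"
      using schwarz[OF Om x fd, of "axis k 1" "axis n 1"] pk(1) pn(1) unfolding pd_def by simp
    then show ?thesis using pk(2) pn(2) ent2[OF x] by simp
  qed
  have F5c: "(\<Sum>l\<in>UNIV. pd n (pd l R) x $ i $ l) = (\<Sum>j\<in>UNIV. \<Sum>k\<in>UNIV. eps i j k * (\<Sum>p\<in>UNIV. \<alpha> $ j $ p * pd n R x $ k $ p))"
    if x: "x \<in> \<Omega>" for x n i
  proof -
    have dE: "(\<lambda>z. \<Sum>j\<in>UNIV. \<Sum>k\<in>UNIV. eps i j k * (\<alpha> $ j \<bullet> R z $ k)) differentiable (at x)"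
      by (intro pd_sum(2) pd_cmult(2) dinner x)
    have "pd n (\<lambda>z. \<Sum>l\<in>UNIV. pd l R z $ i $ l) x = pd n (\<lambda>z. \<Sum>j\<in>UNIV. \<Sum>k\<in>UNIV. eps i j k * (\<alpha> $ j \<bullet> R z $ k)) x"
      by (rule pd_transform(1)[OF Om x dE]) (use P1 in \<open>simp add: divM_def\<close>)
    also have "\<dots> = (\<Sum>j\<in>UNIV. \<Sum>k\<in>UNIV. eps i j k * (\<Sum>p\<in>UNIV. \<alpha> $ j $ p * pd n R x $ k $ p))"
      by (simp add: pd_sum pd_sum(2) pd_cmult pd_cmult(2) dinner[OF x] pdinner[OF x])
    finally show ?thesis by (simp add: pd_sum dent2[OF x] ent2[OF x])
  qed
  have P2s: "(\<Sum>m\<in>UNIV. pd m (pd m R) x $ i $ l) = (\<Sum>j\<in>UNIV. \<Sum>k\<in>UNIV. eps i j k * (\<Sum>p\<in>UNIV. \<alpha> $ j $ p * pd l R x $ k $ p))"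
    if x: "x \<in> \<Omega>" for x i l
  proof -
    have "(\<Sum>m\<in>UNIV. pd m (pd m R) x $ i $ l) = (\<Sum>m\<in>UNIV. pd m (pd l R) x $ i $ m)"
      by (rule contr[of "\<lambda>n k l. pd n (pd k R) x $ i $ l"]) (rule F5a[OF x])
    also have "\<dots> = (\<Sum>m\<in>UNIV. pd l (pd m R) x $ i $ m)" by (simp add: Sw[OF x])
    also have "\<dots> = (\<Sum>j\<in>UNIV. \<Sum>k\<in>UNIV. eps i j k * (\<Sum>p\<in>UNIV. \<alpha> $ j $ p * pd l R x $ k $ p))" by (rule F5c[OF x])
    finally show ?thesis .
  qed
  have F5d: "(\<Sum>i\<in>UNIV. pd m (pd m R) x $ i $ j * R x $ i $ j + (pd m R x $ i $ j)^2) = 0"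
    if x: "x \<in> \<Omega>" for x m j
  proof -
    have c: "pd m (\<lambda>z. \<Sum>i\<in>UNIV. 2 * (R z $ i $ j * pd m R z $ i $ j)) x = 0"
    proof (rule pd_const_on[OF Om x, of _ 0])
      fix y assume y: "y \<in> \<Omega>"
      show "(\<Sum>i\<in>UNIV. 2 * (R y $ i $ j * pd m R y $ i $ j)) = 0"
        using sk[OF y, of m j j] by (simp add: algebra_simps)
    qed
    have "pd m (\<lambda>z. \<Sum>i\<in>UNIV. 2 * (R z $ i $ j * pd m R z $ i $ j)) x
       = (\<Sum>i\<in>UNIV. 2 * (R x $ i $ j * pd m (\<lambda>z. pd m R z $ i $ j) x + pd m (\<lambda>z. R z $ i $ j) x * pd m R x $ i $ j))"
      by (simp only: pd_sum pd_cmult pd_mult pd_cmult(2) pd_mult(2) dent[OF x] dent2[OF x])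
    also have "\<dots> = (\<Sum>i\<in>UNIV. 2 * (pd m (pd m R) x $ i $ j * R x $ i $ j + (pd m R x $ i $ j)^2))"
      by (simp add: ent[OF x] ent2[OF x] algebra_simps power2_eq_square)
    finally have "(\<Sum>i\<in>UNIV. 2 * (pd m (pd m R) x $ i $ j * R x $ i $ j + (pd m R x $ i $ j)^2)) = 0"
      using c by simp
    then have "2 * (\<Sum>i\<in>UNIV. pd m (pd m R) x $ i $ j * R x $ i $ j + (pd m R x $ i $ j)^2) = 0"
      by (simp only: sum_distrib_left)
    then show ?thesis by simp
  qed
  show ?thesis
  proof (intro conjI ballI allI impI)
    fix x i assume x: "x \<in> \<Omega>"
    show "divM R x $ i = (\<Sum>j\<in>UNIV. \<Sum>k\<in>UNIV. eps i j k * (\<alpha> $ j \<bullet> R x $ k))" by (rule P1[OF x])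
  next
    fix x i assume x: "x \<in> \<Omega>"
    show "(\<Sum>m\<in>UNIV. pd m (pd m R) x $ i) = (\<Sum>j\<in>UNIV. \<Sum>k\<in>UNIV. eps i j k *\<^sub>R grad (\<lambda>y. \<alpha> $ j \<bullet> R y $ k) x)"
      unfolding vec_eq_iff
      by (simp add: sum_component grad_def pdinner[OF x] P2s[OF x])
  next
    fix x assume x: "x \<in> \<Omega>"
    have "(\<Sum>k\<in>UNIV. \<Sum>l\<in>UNIV. \<Sum>m\<in>UNIV. (pd m R x $ k $ l)^2) = (\<Sum>m\<in>UNIV. \<Sum>j\<in>UNIV. \<Sum>i\<in>UNIV. (pd m R x $ i $ j)^2)"
      by (simp only: sum3 ac_simps)
    also have "\<dots> = (\<Sum>m\<in>UNIV. \<Sum>j\<in>UNIV. - (\<Sum>i\<in>UNIV. pd m (pd m R) x $ i $ j * R x $ i $ j))"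
    proof -
      have q: "(\<Sum>i\<in>UNIV. (pd m R x $ i $ j)^2) = - (\<Sum>i\<in>UNIV. pd m (pd m R) x $ i $ j * R x $ i $ j)" for m j
        using F5d[OF x, of m j] unfolding sum.distrib by linarith
      show ?thesis by (simp only: q)
    qed
    also have "\<dots> = - (\<Sum>i\<in>UNIV. \<Sum>j\<in>UNIV. R x $ i $ j * (\<Sum>m\<in>UNIV. pd m (pd m R) x $ i $ j))"
      by (simp only: sum3) (simp only: ring_distribs minus_add_distrib ac_simps)
    also have "\<dots> = - (\<Sum>i\<in>UNIV. \<Sum>j\<in>UNIV. R x $ i $ j * (\<Sum>a\<in>UNIV. \<Sum>b\<in>UNIV. eps i a b * (\<Sum>p\<in>UNIV. \<alpha> $ a $ p * pd j R x $ b $ p)))"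
      by (simp add: P2s[OF x])
    also have "\<dots> = - (\<Sum>a\<in>UNIV. \<Sum>b\<in>UNIV. (\<Sum>i\<in>UNIV. R x $ i $ a * \<alpha> $ i $ b) * (\<Sum>i\<in>UNIV. R x $ i $ b * \<alpha> $ i $ a))"
      using alg(2)[where r = "\<lambda>i l. R x $ i $ l" and g = "\<lambda>m i l. pd m R x $ i $ l" and al = "\<lambda>i j. \<alpha> $ i $ j",
        OF so3_rows[OF SO[OF x]] so3_cols[OF SO[OF x]] so3_cof[OF SO[OF x]] sk[OF x] alpha[OF x]] by simp
    also have "\<dots> = - trace (transpose (R x) ** \<alpha> ** transpose (R x) ** \<alpha>)"
      by (simp add: trace4)
    finally show "(\<Sum>k\<in>UNIV. \<Sum>l\<in>UNIV. \<Sum>m\<in>UNIV. (pd m R x $ k $ l)^2) = - trace (transpose (R x) ** \<alpha> ** transpose (R x) ** \<alpha>)" .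
  next
    fix x assume x: "x \<in> \<Omega>"
    have "transpose (R x) ** \<alpha> ** transpose (R x) ** \<alpha> = (transpose (R x) ** \<alpha>) ** (transpose (R x) ** \<alpha>)"
      by (simp add: matrix_mul_assoc)
    then show "trace (transpose (R x) ** \<alpha> ** transpose (R x) ** \<alpha>)
          = fnorm2 (msym (transpose (R x) ** \<alpha>)) - fnorm2 (mskew (transpose (R x) ** \<alpha>))"
      by (simp add: trace_sq_sym_skew)
  next
    fix x0 assume x0: "x0 \<in> \<Omega>" and I: "R x0 = mat 1"
    have "divM R x0 = (\<chi> i. \<Sum>j\<in>UNIV. \<Sum>k\<in>UNIV. eps i j k * (\<alpha> $ j \<bullet> (mat 1 :: real^3^3) $ k))"
      unfolding vec_eq_iff using P1[OF x0] I by simp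
    then show "(norm (divM R x0))^2 = 2 * fnorm2 (mskew \<alpha>)" by (simp add: div_id)
  next
    fix x assume x: "x \<in> \<Omega>"
    have sg: "fnorm2 (msym (gradRow R i x)) \<ge> (1/3) * (divM R x $ i)^2" for i
      using sym_ge[of "gradRow R i x"] by (simp add: gradRow_def divM_def sum3)
    have "(1/3) * (norm (divM R x))^2 = (1/3) * (divM R x $ 1)^2 + (1/3) * (divM R x $ 2)^2 + (1/3) * (divM R x $ 3)^2"
      unfolding norm3 by (simp add: algebra_simps)
    also have "\<dots> \<le> fnorm2 (msym (gradRow R 1 x)) + fnorm2 (msym (gradRow R 2 x)) + fnorm2 (msym (gradRow R 3 x))"
      by (intro add_mono sg)
    also have "\<dots> = (\<Sum>i\<in>UNIV. fnorm2 (msym (gradRow R i x)))" by (simp only: sum3)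
    finally show "(\<Sum>i\<in>UNIV. fnorm2 (msym (gradRow R i x))) \<ge> (1/3) * (norm (divM R x))^2" .
  next
    fix x assume x: "x \<in> \<Omega>"
    have a: "\<alpha> = (\<chi> i j. \<Sum>k\<in>UNIV. \<Sum>l\<in>UNIV. eps j k l * pd k R x $ i $ l)"
      using curl[OF x] unfolding curlM_def by simp
    have g: "gradRow R i x = (\<chi> l m. pd m R x $ i $ l)" for i unfolding gradRow_def by simp
    show "(\<Sum>i\<in>UNIV. fnorm2 (mskew (gradRow R i x))) = (1/2) * fnorm2 \<alpha>"
      unfolding g using skew_sum[of "\<lambda>m i l. pd m R x $ i $ l"] a by simp
  qed
qed

end
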